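(* Let $P=\{x\in\mathbb{R}^n: Ax\le b,\ 0\le x_i\le u_i \text{ for } i\in I\}$ be a rational polyhedron with $I=\{1,\dots,l\}$ and positive integers $u_i$. If $\mathcal{B}$ and $\mathcal{C}$ are two binarization schemes each defined by unimodular binarization polytopes, then \[\operatorname{proj}_x\big(\mathrm{SC}(P_{\mathcal{B}},I_{\mathcal{B}})\big)=\operatorname{proj}_x\big(\mathrm{SC}(P_{\mathcal{C}},I_{\mathcal{C}})\big).\]
   Context: For positive integers $q,u$, $\Gamma^q_u$ is the set of rational polytopes $B\subseteq\{(x,z)\in\mathbb{R}\times[0,1]^q:0\le x\le u\}$ with $\operatorname{proj}_x(B\cap(\mathbb{R}\times\{0,1\}^q))=\{0,1,\dots,u\}$. $B$ is perfect if for each $x\in\{0,\dots,u\}$ there is a unique $z\in\{0,1\}^q$ with $(x,z)\in B$, and $B=\mathrm{conv}(B\cap(\mathbb{R}\times\{0,1\}^q))$. A perfect $B\in\Gamma^u_u$, $B=\mathrm{conv}\{(j,w^j):j=0,\dots,u\}$ with $w^j\in\{0,1\}^u$, is unimodular if the matrix with columns $w^j-w^0$ ($j=1,\dots,u$) is integral with determinant $\pm1$. A binarization scheme defined by unimodular binarization polytopes is $\mathcal{B}=(B^1,\dots,B^l)$ with each $B^i\in\Gamma^{u_i}_{u_i}$ unimodular; with $q=\sum_iq_i$ ($q_i$ the number of new variables of $B^i$), $P_{\mathcal{B}}=\{(x,z)\in\mathbb{R}^n\times\mathbb{R}^q: x\in P,\ (x_i,z_i)\in B^i\text{ for } i\in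 I\}$, $z=(z_1,\dots,z_l)$, $z_i\in\mathbb{R}^{q_i}$, and $I_{\mathcal{B}}=\{1,\dots,l,n+1,\dots,n+q\}$. Split closure: for $J\subseteq\{1,\dots,N\}$ and $X\subseteq\mathbb{R}^N$, $\mathrm{SC}(X,J)=\bigcap\mathrm{conv}(X\setminus S)$ over all $S=\{y:\pi_0<\pi^Ty<\pi_0+1\}$ with $\pi\in\mathbb{Z}^N$, $\pi_j=0$ for $j\notin J$, $\pi_0\in\mathbb{Z}$. *)

theory Defs
  imports "HOL-Analysis.Analysis" "HOL-Library.Function_Algebras"
begin

(* Finite-dimensional real vectors of varying dimension are modelled as functions
   nat => real; a vector of R^N is a function vanishing outside {0..<N}.
   We make nat => real a real vector space (pointwise) so that the library's
   "convex hull" can be used. *)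

instantiation "fun" :: (type, real_vector) real_vector
begin
definition scaleR_fun :: "real \<Rightarrow> ('a \<Rightarrow> 'b) \<Rightarrow> 'a \<Rightarrow> 'b"
  where "scaleR_fun c f = (\<lambda>x. c *\<^sub>R f x)"
instance
  by standard (auto simp: scaleR_fun_def fun_eq_iff scaleR_add_right scaleR_add_left)
end

definition vecs :: "nat \<Rightarrow> (nat \<Rightarrow> real) set" where
  "vecs N = {y. \<forall>j\<ge>N. y j = 0}"

definition bin :: "nat \<Rightarrow> (nat \<Rightarrow> real) set" where
  "bin q = {z. (\<forall>k<q. z k \<in> {0,1}) \<and> (\<forall>k\<ge>q. z k = 0)}"

definition cube :: "nat \<Rightarrow> (nat \<Rightarrow> real) set" where
  "cube q = {z. (\<forall>k<q. 0 \<le> z k \<and> z k \<le> 1) \<and> (\<forall>k\<ge>q. z k = 0)}"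

definition rational_polytope :: "nat \<Rightarrow> (real \<times> (nat \<Rightarrow> real)) set \<Rightarrow> bool" where
  "rational_polytope q B \<longleftrightarrow>
     (\<exists>V. finite V \<and> V \<subseteq> UNIV \<times> vecs q \<and>
          (\<forall>(x,z)\<in>V. x \<in> \<rat> \<and> (\<forall>k. z k \<in> \<rat>)) \<and> B = convex hull V)"

definition Gamma :: "nat \<Rightarrow> nat \<Rightarrow> (real \<times> (nat \<Rightarrow> real)) set set" where
  "Gamma q u = {B. rational_polytope q B \<and>
      B \<subseteq> {(x,z). z \<in> cube q \<and> 0 \<le> x \<and> x \<le> real u} \<and>
      fst ` (B \<inter> (UNIV \<times> bin q)) = real ` {0..u}}"

definition perfect :: "nat \<Rightarrow> nat \<Rightarrow> (real \<times> (nat \<Rightarrow> real)) set \<Rightarrow> bool" where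
  "perfect q u B \<longleftrightarrow>
     (\<forall>x\<in>{0..u}. \<exists>!z. z \<in> bin q \<and> (real x, z) \<in> B) \<and>
     B = convex hull (B \<inter> (UNIV \<times> bin q))"

definition det_nat :: "nat \<Rightarrow> (nat \<Rightarrow> nat \<Rightarrow> real) \<Rightarrow> real" where
  "det_nat u M = (\<Sum>p | p permutes {0..<u}. of_int (sign p) * (\<Prod>k<u. M k (p k)))"

(* unimodular binarization polytope B in Gamma^u_u:
   B perfect, B = conv{(j,w^j) : j=0..u}, w^j in {0,1}^u, and the matrix with
   columns w^j - w^0 (j=1..u) is integral with determinant +-1.
   Column j-1 (0-based) is w^j - w^0; entry (k, j-1) is w^j_k - w^0_k. *)
definition unimodular_binpoly :: "nat \<Rightarrow> (real \<times> (nat \<Rightarrow> real)) set \<Rightarrow> bool" where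
  "unimodular_binpoly u B \<longleftrightarrow>
     B \<in> Gamma u u \<and> perfect u u B \<and>
     (\<exists>w :: nat \<Rightarrow> nat \<Rightarrow> real.
        (\<forall>j\<le>u. w j \<in> bin u) \<and>
        B = convex hull {(real j, w j) | j. j \<le> u} \<and>
        (\<forall>k<u. \<forall>j<u. w (Suc j) k - w 0 k \<in> \<int>) \<and>
        (det_nat u (\<lambda>k j. w (Suc j) k - w 0 k) = 1 \<or>
         det_nat u (\<lambda>k j. w (Suc j) k - w 0 k) = -1))"

definition polyP :: "nat \<Rightarrow> nat \<Rightarrow> (nat \<Rightarrow> nat \<Rightarrow> real) \<Rightarrow> (nat \<Rightarrow> real)
                     \<Rightarrow> nat \<Rightarrow> (nat \<Rightarrow> nat) \<Rightarrow> (nat \<Rightarrow> real) set" where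
  "polyP n m A b l u = {x \<in> vecs n. (\<forall>r<m. (\<Sum>j<n. A r j * x j) \<le> b r) \<and>
                                    (\<forall>i<l. 0 \<le> x i \<and> x i \<le> real (u i))}"

(* offset of the block z_i inside the new variables: q_i = u_i *)
definition offs :: "(nat \<Rightarrow> nat) \<Rightarrow> nat \<Rightarrow> nat" where
  "offs u i = (\<Sum>k<i. u k)"

(* P_B in R^{n+q}, q = sum_{i<l} u_i; coordinates 0..n-1 are x, coordinate
   n + offs u i + k (k < u_i) is the k-th entry of z_i *)
definition P_scheme :: "nat \<Rightarrow> (nat \<Rightarrow> real) set \<Rightarrow> nat \<Rightarrow> (nat \<Rightarrow> nat)
                        \<Rightarrow> (nat \<Rightarrow> (real \<times> (nat \<Rightarrow> real)) set) \<Rightarrow> (nat \<Rightarrow> real) set" where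
  "P_scheme n P l u B = {y \<in> vecs (n + offs u l).
      (\<lambda>j. if j < n then y j else 0) \<in> P \<and>
      (\<forall>i<l. (y i, (\<lambda>k. if k < u i then y (n + offs u i + k) else 0)) \<in> B i)}"

(* I_B = {1..l} \<union> {n+1..n+q} (here 0-based) *)
definition I_scheme :: "nat \<Rightarrow> nat \<Rightarrow> (nat \<Rightarrow> nat) \<Rightarrow> nat set" where
  "I_scheme n l u = {0..<l} \<union> {n..<n + offs u l}"

definition split_closure :: "nat \<Rightarrow> (nat \<Rightarrow> real) set \<Rightarrow> nat set \<Rightarrow> (nat \<Rightarrow> real) set" where
  "split_closure N X J = \<Inter> {convex hull (X - S) | S.
      \<exists>(\<pi>::nat \<Rightarrow> int) (\<pi>0::int). (\<forall>j. j \<notin> J \<or> N \<le> j \<longrightarrow> \<pi> j = 0) \<and>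
        S = {y. of_int \<pi>0 < (\<Sum>j<N. of_int (\<pi> j) * y j) \<and>
                (\<Sum>j<N. of_int (\<pi> j) * y j) < of_int \<pi>0 + 1}}"

definition proj_x :: "nat \<Rightarrow> (nat \<Rightarrow> real) set \<Rightarrow> (nat \<Rightarrow> real) set" where
  "proj_x n Y = (\<lambda>y j. if j < n then y j else 0) ` Y"

end

theory Submission
  imports Defs "Jordan_Normal_Form.Determinant"
begin

lemma det_Ints:
  fixes A :: "real mat"
  assumes A: "A \<in> carrier_mat k k" and I: "\<forall>i<k. \<forall>j<k. A $$ (i,j) \<in> \<int>"
  shows "det A \<in> \<int>"
proof -
  have "det A = (\<Sum> p \<in> {p. p permutes {0 ..< k}}. signof p * (\<Prod> i = 0 ..< k. A $$ (i, p i)))"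
    using det_def'[OF A] .
  also have "\<dots> \<in> \<int>"
  proof (intro Ints_sum Ints_mult Ints_prod)
    fix p i assume "p \<in> {p. p permutes {0..<k}}" "i \<in> {0..<k}"
    then have "p i < k" using permutes_in_image by fastforce
    then show "A $$ (i, p i) \<in> \<int>" using I \<open>i \<in> {0..<k}\<close> by auto
  qed auto
  finally show ?thesis .
qed

lemma cofactor_Ints:
  fixes A :: "real mat"
  assumes A: "A \<in> carrier_mat k k" and I: "\<forall>i<k. \<forall>j<k. A $$ (i,j) \<in> \<int>"
    and ij: "i < k" "j < k"
  shows "cofactor A i j \<in> \<int>"
proof -
  have D: "mat_delete A i j \<in> carrier_mat (k-1) (k-1)" using A by auto
  have "\<forall>a<k-1. \<forall>b<k-1. mat_delete A i j $$ (a,b) \<in> \<int>"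
    using A I by (auto simp: mat_delete_def)
  then have "det (mat_delete A i j) \<in> \<int>" using det_Ints[OF D] by blast
  then show ?thesis unfolding cofactor_def by (intro Ints_mult) auto
qed

lemma unimod_inv:
  fixes W :: "nat \<Rightarrow> nat \<Rightarrow> real"
  assumes I: "\<forall>k<u. \<forall>j<u. W k j \<in> \<int>"
    and D: "det_nat u W = 1 \<or> det_nat u W = -1"
  shows "\<exists>W'. (\<forall>k<u. \<forall>j<u. W' k j \<in> \<int>) \<and>
     (\<forall>k<u. \<forall>j<u. (\<Sum>t<u. W' k t * W t j) = (if k = j then 1 else 0))"
proof -
  define A :: "real mat" where "A = mat u u (\<lambda>(k,j). W k j)"
  have A: "A \<in> carrier_mat u u" unfolding A_def by auto
  have "det A = det_nat u W"
    unfolding det_def'[OF A] det_nat_def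
  proof (rule sum.cong)
    fix p assume "p \<in> {p. p permutes {0..<u}}"
    then have "\<forall>i<u. p i < u" using permutes_in_image by fastforce
    then show "of_int (sign p) * (\<Prod>i = 0..<u. A $$ (i, p i)) = of_int (sign p) * (\<Prod>k<u. W k (p k))"
      unfolding A_def by (auto simp: atLeast0LessThan intro!: prod.cong)
  qed (simp add: atLeast0LessThan)
  then have dd: "det A * det A = 1" using D by auto
  define W' where "W' k j = det A * adj_mat A $$ (k,j)" for k j
  have AI: "\<forall>i<u. \<forall>j<u. A $$ (i,j) \<in> \<int>" using I unfolding A_def by auto
  have "W' k j \<in> \<int>" if "k < u" "j < u" for k j
  proof -
    have "det A \<in> \<int>" using det_Ints[OF A AI] .
    moreover have "adj_mat A $$ (k,j) = cofactor A j k" using A that by (auto simp: adj_mat_def)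
    moreover have "cofactor A j k \<in> \<int>" using cofactor_Ints[OF A AI] that by auto
    ultimately show ?thesis unfolding W'_def by auto
  qed
  moreover have "(\<Sum>t<u. W' k t * W t j) = (if k = j then 1 else 0)" if "k < u" "j < u" for k j
  proof -
    have "(adj_mat A * A) $$ (k,j) = (det A \<cdot>\<^sub>m 1\<^sub>m u) $$ (k,j)" using adj_mat(3)[OF A] by simp
    moreover have "(adj_mat A * A) $$ (k,j) = (\<Sum>t<u. adj_mat A $$ (k,t) * W t j)"
      using that A adj_mat(1)[OF A] by (auto simp: scalar_prod_def A_def atLeast0LessThan intro!: sum.cong)
    ultimately have "(\<Sum>t<u. adj_mat A $$ (k,t) * W t j) = det A * (if k = j then 1 else 0)"
      using that by auto
    then have "det A * (\<Sum>t<u. adj_mat A $$ (k,t) * W t j) = (if k = j then 1 else 0)"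
      using dd by (auto simp: algebra_simps)
    then show ?thesis unfolding W'_def by (simp add: sum_distrib_left algebra_simps)
  qed
  ultimately show ?thesis by blast
qed


definition Gm :: "nat \<Rightarrow> (nat \<Rightarrow> real) \<Rightarrow> (nat \<Rightarrow> nat \<Rightarrow> real) \<Rightarrow> (nat \<Rightarrow> real) \<Rightarrow> (nat \<Rightarrow> real) \<Rightarrow> nat \<Rightarrow> real" where
  "Gm q v0 M w0 z = (\<lambda>k. if k < q then v0 k + (\<Sum>k'<q. M k k' * (z k' - w0 k')) else 0)"

lemma Gm_cong: "(\<forall>k<q. z k = z' k) \<Longrightarrow> Gm q v0 M w0 z = Gm q v0 M w0 z'"
  unfolding Gm_def by (auto intro!: sum.cong)

lemma Gm_aff:
  assumes "a + b = 1"
  shows "Gm q v0 M w0 (a *\<^sub>R z1 + b *\<^sub>R z2) = a *\<^sub>R Gm q v0 M w0 z1 + b *\<^sub>R Gm q v0 M w0 z2"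
proof (rule ext)
  fix k
  show "Gm q v0 M w0 (a *\<^sub>R z1 + b *\<^sub>R z2) k = (a *\<^sub>R Gm q v0 M w0 z1 + b *\<^sub>R Gm q v0 M w0 z2) k"
  proof (cases "k < q")
    case True
    have "(\<Sum>k'<q. M k k' * ((a *\<^sub>R z1 + b *\<^sub>R z2) k' - w0 k'))
        = a * (\<Sum>k'<q. M k k' * (z1 k' - w0 k')) + b * (\<Sum>k'<q. M k k' * (z2 k' - w0 k'))"
      unfolding sum_distrib_left sum.distrib[symmetric]
    proof (rule sum.cong)
      fix k' show "M k k' * ((a *\<^sub>R z1 + b *\<^sub>R z2) k' - w0 k') =
           a * (M k k' * (z1 k' - w0 k')) + b * (M k k' * (z2 k' - w0 k'))"
        using assms by (simp add: scaleR_fun_def algebra_simps)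
           (metis add_diff_cancel_left' mult.commute mult.left_commute ring_class.ring_distribs(1) mult_1 diff_diff_eq2 eq_diff_eq)
    qed simp
    then show ?thesis using True assms unfolding Gm_def
      by (simp add: scaleR_fun_def algebra_simps)
         (metis add.commute add.left_commute distrib_right mult_1 mult.commute)
  qed (simp add: Gm_def scaleR_fun_def)
qed

lemma hull_aff:
  fixes f :: "'a::real_vector \<Rightarrow> 'b::real_vector"
  assumes "\<And>x y a b. a + b = 1 \<Longrightarrow> f (a *\<^sub>R x + b *\<^sub>R y) = a *\<^sub>R f x + b *\<^sub>R f y"
  shows "f ` (convex hull X) \<subseteq> convex hull (f ` X)"
proof -
  have "convex {x. f x \<in> convex hull (f ` X)}"
    by (rule convexI) (auto simp: assms intro!: convexD[OF convex_convex_hull])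
  moreover have "X \<subseteq> {x. f x \<in> convex hull (f ` X)}"
    by (auto intro: hull_inc)
  ultimately have "convex hull X \<subseteq> {x. f x \<in> convex hull (f ` X)}"
    by (rule hull_minimal[rotated])
  then show ?thesis by auto
qed

lemma unimod_map:
  assumes hB: "unimodular_binpoly q B" and hC: "unimodular_binpoly q C"
  shows "\<exists>t. (\<forall>k<q. fst t k \<in> \<int> \<and> snd (snd t) k \<in> \<int>) \<and> (\<forall>k<q. \<forall>k'<q. fst (snd t) k k' \<in> \<int>) \<and>
     (\<forall>x z. (x,z) \<in> B \<longrightarrow> (x, Gm q (fst t) (fst (snd t)) (snd (snd t)) z) \<in> C)"
proof -
  obtain w where w: "\<forall>j\<le>q. w j \<in> bin q" "B = convex hull {(real j, w j) | j. j \<le> q}"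
    "\<forall>k<q. \<forall>j<q. w (Suc j) k - w 0 k \<in> \<int>"
    "det_nat q (\<lambda>k j. w (Suc j) k - w 0 k) = 1 \<or> det_nat q (\<lambda>k j. w (Suc j) k - w 0 k) = -1"
    using hB unfolding unimodular_binpoly_def by blast
  obtain v where v: "\<forall>j\<le>q. v j \<in> bin q" "C = convex hull {(real j, v j) | j. j \<le> q}"
    "\<forall>k<q. \<forall>j<q. v (Suc j) k - v 0 k \<in> \<int>"
    using hC unfolding unimodular_binpoly_def by blast
  obtain W' where W': "\<forall>k<q. \<forall>j<q. W' k j \<in> \<int>"
    "\<forall>k<q. \<forall>j<q. (\<Sum>t<q. W' k t * (w (Suc j) t - w 0 t)) = (if k = j then 1 else 0)"
    using unimod_inv[OF w(3) w(4)] by blast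
  define M where "M k k' = (\<Sum>s<q. (v (Suc s) k - v 0 k) * W' s k')" for k k'
  have Mi: "\<forall>k<q. \<forall>k'<q. M k k' \<in> \<int>"
    unfolding M_def using W' v(3) by (auto intro!: Ints_sum Ints_mult)
  have b01: "\<forall>k<q. w 0 k \<in> \<int> \<and> v 0 k \<in> \<int>"
  proof (intro allI impI)
    fix k assume "k < q"
    then have "w 0 k \<in> {0,1}" "v 0 k \<in> {0,1}" using w(1) v(1) by (auto simp: bin_def)
    then show "w 0 k \<in> \<int> \<and> v 0 k \<in> \<int>" by auto
  qed
  define \<Phi> where "\<Phi> p = (fst p, Gm q (v 0) M (w 0) (snd p))" for p :: "real \<times> (nat \<Rightarrow> real)"
  have aff: "\<Phi> (a *\<^sub>R p1 + b *\<^sub>R p2) = a *\<^sub>R \<Phi> p1 + b *\<^sub>R \<Phi> p2" if "a + b = 1" for a b p1 p2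
    unfolding \<Phi>_def using Gm_aff[OF that] by (cases p1, cases p2) simp
  have vert: "Gm q (v 0) M (w 0) (w j) = v j" if "j \<le> q" for j
  proof (rule ext)
    fix k
    show "Gm q (v 0) M (w 0) (w j) k = v j k"
    proof (cases "k < q")
      case False then show ?thesis using v(1) that by (auto simp: Gm_def bin_def)
    next
      case True
      show ?thesis
      proof (cases j)
        case 0 then show ?thesis using True by (simp add: Gm_def)
      next
        case (Suc t)
        then have t: "t < q" using that by auto
        have "(\<Sum>k'<q. M k k' * (w j k' - w 0 k'))
            = (\<Sum>s<q. (v (Suc s) k - v 0 k) * (\<Sum>k'<q. W' s k' * (w (Suc t) k' - w 0 k')))"
          unfolding M_def Suc sum_distrib_right sum_distrib_left
          by (subst sum.swap) (simp add: algebra_simps)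
        also have "\<dots> = (\<Sum>s<q. (v (Suc s) k - v 0 k) * (if s = t then 1 else 0))"
          using W'(2) t by (intro sum.cong) auto
        also have "\<dots> = v j k - v 0 k" using t Suc by (simp add: if_distrib cong: if_cong)
        finally show ?thesis using True by (simp add: Gm_def)
      qed
    qed
  qed
  have "\<Phi> ` B \<subseteq> C"
  proof -
    have "\<Phi> ` B \<subseteq> convex hull (\<Phi> ` {(real j, w j) | j. j \<le> q})"
      unfolding w(2) by (rule hull_aff) (rule aff)
    also have "\<Phi> ` {(real j, w j) | j. j \<le> q} = {(real j, v j) | j. j \<le> q}"
      unfolding \<Phi>_def using vert by force
    finally show ?thesis using v(2) by simp
  qed
  then have "\<forall>x z. (x,z) \<in> B \<longrightarrow> (x, Gm q (v 0) M (w 0) z) \<in> C"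
    unfolding \<Phi>_def by force
  then show ?thesis using Mi b01
    by (intro exI[of _ "(v 0, M, w 0)"]) auto
qed


lemma offs_Suc: "offs u (Suc i) = offs u i + u i"
  unfolding offs_def by simp

lemma offs_mono: "i \<le> i' \<Longrightarrow> offs u i \<le> offs u i'"
  unfolding offs_def by (rule sum_mono2) auto

lemma offs_lt: "i < i' \<Longrightarrow> offs u i + u i \<le> offs u i'"
  using offs_mono[of "Suc i" i' u] offs_Suc[of u i] by simp

definition Fm where
  "Fm n l u v0 M w0 y = (\<lambda>j. (if j < n then y j else 0) +
     (\<Sum>i<l. if n + offs u i \<le> j \<and> j < n + offs u i + u i
             then Gm (u i) (v0 i) (M i) (w0 i) (\<lambda>k. y (n + offs u i + k)) (j - (n + offs u i)) else 0))"

lemma Fm_x: "j < n \<Longrightarrow> Fm n l u v0 M w0 y j = y j"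
  unfolding Fm_def by (auto intro!: sum.neutral)

lemma Fm_high: "n + offs u l \<le> j \<Longrightarrow> Fm n l u v0 M w0 y j = 0"
proof -
  assume a: "n + offs u l \<le> j"
  have "\<forall>i<l. \<not> (j < n + offs u i + u i)"
    using offs_mono[of "Suc _" l u] offs_Suc[of u] a by (metis Suc_leI add.assoc add_le_mono le_trans not_le order_refl)
  then show ?thesis unfolding Fm_def using a by (auto intro!: sum.neutral)
qed

lemma block_unique:
  assumes "i < l" "i' < l" "k < u i" "n + offs u i' \<le> n + offs u i + k" "n + offs u i + k < n + offs u i' + u i'"
  shows "i' = i"
proof (rule ccontr)
  assume "i' \<noteq> i"
  then consider "i < i'" | "i' < i" by linarith
  then show False
  proof cases
    case 1 then show False using offs_lt[OF 1, of u] assms by linarith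
  next
    case 2 then show False using offs_lt[OF 2, of u] assms by linarith
  qed
qed

lemma Fm_blk:
  assumes "i < l" "k < u i"
  shows "Fm n l u v0 M w0 y (n + offs u i + k) = Gm (u i) (v0 i) (M i) (w0 i) (\<lambda>k. y (n + offs u i + k)) k"
proof -
  have "(\<Sum>i'<l. if n + offs u i' \<le> n + offs u i + k \<and> n + offs u i + k < n + offs u i' + u i'
             then Gm (u i') (v0 i') (M i') (w0 i') (\<lambda>k. y (n + offs u i' + k)) (n + offs u i + k - (n + offs u i')) else 0)
      = (\<Sum>i'<l. if i' = i then Gm (u i) (v0 i) (M i) (w0 i) (\<lambda>k. y (n + offs u i + k)) k else 0)"
    using block_unique[of i l _ k u n] assms by (intro sum.cong) auto
  also have "\<dots> = Gm (u i) (v0 i) (M i) (w0 i) (\<lambda>k. y (n + offs u i + k)) k"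
    using assms by simp
  finally show ?thesis unfolding Fm_def by simp
qed

lemma Fm_aff:
  assumes "a + b = 1"
  shows "Fm n l u v0 M w0 (a *\<^sub>R y1 + b *\<^sub>R y2) = a *\<^sub>R Fm n l u v0 M w0 y1 + b *\<^sub>R Fm n l u v0 M w0 y2"
proof (rule ext)
  fix j
  have G: "Gm (u i) (v0 i) (M i) (w0 i) (\<lambda>k. (a *\<^sub>R y1 + b *\<^sub>R y2) (n + offs u i + k))
     = a *\<^sub>R Gm (u i) (v0 i) (M i) (w0 i) (\<lambda>k. y1 (n + offs u i + k)) + b *\<^sub>R Gm (u i) (v0 i) (M i) (w0 i) (\<lambda>k. y2 (n + offs u i + k))" for i
  proof -
    have "(\<lambda>k. (a *\<^sub>R y1 + b *\<^sub>R y2) (n + offs u i + k)) = a *\<^sub>R (\<lambda>k. y1 (n + offs u i + k)) + b *\<^sub>R (\<lambda>k. y2 (n + offs u i + k))"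
      by (simp add: scaleR_fun_def fun_eq_iff)
    then show ?thesis using Gm_aff[OF assms] by simp
  qed
  show "Fm n l u v0 M w0 (a *\<^sub>R y1 + b *\<^sub>R y2) j = (a *\<^sub>R Fm n l u v0 M w0 y1 + b *\<^sub>R Fm n l u v0 M w0 y2) j"
    unfolding Fm_def G using assms
    by (simp add: scaleR_fun_def sum_distrib_left sum.distrib[symmetric] algebra_simps if_distrib cong: if_cong)
qed


lemma shift_sum: "(\<Sum>j\<in>{a..<a+q}. h j) = (\<Sum>k<q. h (a + k :: nat)) "
  by (induct q) (simp_all add: lessThan_Suc add.commute)

lemma blocksum:
  assumes "i < l"
  shows "(\<Sum>j<n + offs u l. if n + offs u i \<le> j \<and> j < n + offs u i + u i then h j else 0)
       = (\<Sum>k<u i. h (n + offs u i + k))"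
proof -
  have sub: "n + offs u i + u i \<le> n + offs u l" using offs_mono[of "Suc i" l u] offs_Suc[of u i] assms by simp
  have "(\<Sum>j<n + offs u l. if n + offs u i \<le> j \<and> j < n + offs u i + u i then h j else 0)
      = (\<Sum>j\<in>{j \<in> {..<n + offs u l}. n + offs u i \<le> j \<and> j < n + offs u i + u i}. h j)"
    by (rule sum.inter_filter[symmetric]) simp
  also have "{j \<in> {..<n + offs u l}. n + offs u i \<le> j \<and> j < n + offs u i + u i} = {n + offs u i..<n + offs u i + u i}"
    using sub by auto
  finally show ?thesis using shift_sum by simp
qed

lemma xsum:
  fixes n N :: nat
  assumes "n \<le> N" shows "(\<Sum>j<N. if j < n then f j else 0) = (\<Sum>j<n. (f j :: real))"
proof -
  have "(\<Sum>j<N. if j < n then f j else 0) = sum f {j \<in> {..<N}. j < n}"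
    by (rule sum.inter_filter[symmetric]) simp
  also have "{j \<in> {..<N}. j < n} = {..<n}" using assms by auto
  finally show ?thesis .
qed

lemma Gm_lin:
  "(\<Sum>k<q. p k * Gm q v0 M w0 z k) = (\<Sum>k<q. p k * v0 k) - (\<Sum>k<q. \<Sum>k'<q. p k * M k k' * w0 k')
      + (\<Sum>k'<q. (\<Sum>k<q. p k * M k k') * z k')"
proof -
  have "(\<Sum>k<q. p k * Gm q v0 M w0 z k) = (\<Sum>k<q. p k * v0 k - (\<Sum>k'<q. p k * M k k' * w0 k') + (\<Sum>k'<q. p k * M k k' * z k'))"
    by (intro sum.cong) (simp_all add: Gm_def sum_distrib_left ring_distribs sum_subtractf algebra_simps)
  also have "\<dots> = (\<Sum>k<q. p k * v0 k) - (\<Sum>k<q. \<Sum>k'<q. p k * M k k' * w0 k') + (\<Sum>k<q. \<Sum>k'<q. p k * M k k' * z k')"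
    by (simp add: sum.distrib sum_subtractf)
  also have "(\<Sum>k<q. \<Sum>k'<q. p k * M k k' * z k') = (\<Sum>k'<q. (\<Sum>k<q. p k * M k k') * z k')"
    by (subst sum.swap) (simp add: sum_distrib_right)
  finally show ?thesis .
qed

lemma of_int_floor_Ints: "(x::real) \<in> \<int> \<Longrightarrow> of_int \<lfloor>x\<rfloor> = x"
  by (metis Ints_cases floor_of_int)

lemma split_pre:
  assumes ln: "l \<le> n"
    and int: "\<forall>i<l. (\<forall>k<u i. v0 i k \<in> \<int> \<and> w0 i k \<in> \<int>) \<and> (\<forall>k<u i. \<forall>k'<u i. M i k k' \<in> \<int>)"
    and pz: "\<forall>j. j \<notin> I_scheme n l u \<or> n + offs u l \<le> j \<longrightarrow> \<pi> j = 0"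
  shows "\<exists>(\<pi>'::nat \<Rightarrow> int) (\<pi>0'::int). (\<forall>j. j \<notin> I_scheme n l u \<or> n + offs u l \<le> j \<longrightarrow> \<pi>' j = 0) \<and>
    {y. Fm n l u v0 M w0 y \<in> {y. of_int \<pi>0 < (\<Sum>j<n + offs u l. of_int (\<pi> j) * y j) \<and>
                (\<Sum>j<n + offs u l. of_int (\<pi> j) * y j) < of_int \<pi>0 + 1}}
    = {y. of_int \<pi>0' < (\<Sum>j<n + offs u l. of_int (\<pi>' j) * y j) \<and>
                (\<Sum>j<n + offs u l. of_int (\<pi>' j) * y j) < of_int \<pi>0' + 1}"
proof -
  define N where "N = n + offs u l"
  define b where "b i = n + offs u i" for i
  have nN: "n \<le> N" unfolding N_def by simp
  define c where "c i k' = (\<Sum>k<u i. real_of_int (\<pi> (b i + k)) * M i k k')" for i k'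
  define K where "K = (\<Sum>i<l. (\<Sum>k<u i. real_of_int (\<pi> (b i + k)) * v0 i k)
       - (\<Sum>k<u i. \<Sum>k'<u i. real_of_int (\<pi> (b i + k)) * M i k k' * w0 i k'))"
  define pr where "pr j = (if j < n then real_of_int (\<pi> j) else 0) +
      (\<Sum>i<l. if b i \<le> j \<and> j < b i + u i then c i (j - b i) else 0)" for j
  have key: "(\<Sum>j<N. of_int (\<pi> j) * Fm n l u v0 M w0 y j) = (\<Sum>j<N. pr j * y j) + K" for y
  proof -
    have "(\<Sum>j<N. of_int (\<pi> j) * Fm n l u v0 M w0 y j)
      = (\<Sum>j<N. if j < n then of_int (\<pi> j) * y j else 0) +
        (\<Sum>i<l. \<Sum>j<N. if b i \<le> j \<and> j < b i + u i then of_int (\<pi> j) *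
           Gm (u i) (v0 i) (M i) (w0 i) (\<lambda>k. y (b i + k)) (j - b i) else 0)"
    proof -
      have "(\<Sum>j<N. of_int (\<pi> j) * Fm n l u v0 M w0 y j) = (\<Sum>j<N. (if j < n then of_int (\<pi> j) * y j else 0) +
         (\<Sum>i<l. if b i \<le> j \<and> j < b i + u i then of_int (\<pi> j) *
           Gm (u i) (v0 i) (M i) (w0 i) (\<lambda>k. y (b i + k)) (j - b i) else 0))"
        by (intro sum.cong) (auto simp: Fm_def b_def distrib_left sum_distrib_left intro!: sum.cong)
      also have "\<dots> = (\<Sum>j<N. if j < n then of_int (\<pi> j) * y j else 0) + (\<Sum>j<N. \<Sum>i<l. if b i \<le> j \<and> j < b i + u i then of_int (\<pi> j) *
           Gm (u i) (v0 i) (M i) (w0 i) (\<lambda>k. y (b i + k)) (j - b i) else 0)"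
        by (rule sum.distrib)
      finally show ?thesis by (simp only: sum.swap[of _ "{..<N}" "{..<l}"])
    qed
    also have "\<dots> = (\<Sum>j<n. of_int (\<pi> j) * y j) +
        (\<Sum>i<l. \<Sum>k<u i. of_int (\<pi> (b i + k)) * Gm (u i) (v0 i) (M i) (w0 i) (\<lambda>k. y (b i + k)) k)"
    proof -
      have "(\<Sum>j<N. if b i \<le> j \<and> j < b i + u i then of_int (\<pi> j) *
           Gm (u i) (v0 i) (M i) (w0 i) (\<lambda>k. y (b i + k)) (j - b i) else 0) =
          (\<Sum>k<u i. of_int (\<pi> (b i + k)) * Gm (u i) (v0 i) (M i) (w0 i) (\<lambda>k. y (b i + k)) k)"
        if "i < l" for i
        using blocksum[OF that, of n u "\<lambda>j. of_int (\<pi> j) * Gm (u i) (v0 i) (M i) (w0 i) (\<lambda>k. y (b i + k)) (j - b i)"]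
        unfolding N_def b_def by simp
      then show ?thesis using xsum[OF nN] by simp
    qed
    also have "\<dots> = (\<Sum>j<n. of_int (\<pi> j) * y j) + K +
        (\<Sum>i<l. \<Sum>k'<u i. c i k' * y (b i + k'))"
      unfolding K_def c_def Gm_lin by (simp add: sum.distrib sum_subtractf)
    also have "(\<Sum>j<N. pr j * y j) = (\<Sum>j<n. of_int (\<pi> j) * y j) + (\<Sum>i<l. \<Sum>k'<u i. c i k' * y (b i + k'))"
    proof -
      have "(\<Sum>j<N. pr j * y j) = (\<Sum>j<N. if j < n then of_int (\<pi> j) * y j else 0) +
         (\<Sum>i<l. \<Sum>j<N. if b i \<le> j \<and> j < b i + u i then c i (j - b i) * y j else 0)"
      proof -
        have "(\<Sum>j<N. pr j * y j) = (\<Sum>j<N. (if j < n then of_int (\<pi> j) * y j else 0) +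
         (\<Sum>i<l. if b i \<le> j \<and> j < b i + u i then c i (j - b i) * y j else 0))"
          by (intro sum.cong) (auto simp: pr_def distrib_right sum_distrib_right intro!: sum.cong)
        also have "\<dots> = (\<Sum>j<N. if j < n then of_int (\<pi> j) * y j else 0) + (\<Sum>j<N. \<Sum>i<l. if b i \<le> j \<and> j < b i + u i then c i (j - b i) * y j else 0)"
          by (rule sum.distrib)
        finally show ?thesis by (simp only: sum.swap[of _ "{..<N}" "{..<l}"])
      qed
      also have "\<dots> = (\<Sum>j<n. of_int (\<pi> j) * y j) + (\<Sum>i<l. \<Sum>k'<u i. c i k' * y (b i + k'))"
      proof -
        have "(\<Sum>j<N. if b i \<le> j \<and> j < b i + u i then c i (j - b i) * y j else 0) =
          (\<Sum>k'<u i. c i k' * y (b i + k'))" if "i < l" for i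
          using blocksum[OF that, of n u "\<lambda>j. c i (j - b i) * y j"] unfolding N_def b_def by simp
        then show ?thesis using xsum[OF nN] by simp
      qed
      finally show ?thesis .
    qed
    ultimately show ?thesis by simp
  qed
  have cI: "c i k' \<in> \<int>" if "i < l" "k' < u i" for i k'
    unfolding c_def using int that by (auto intro!: Ints_sum Ints_mult)
  have KI: "K \<in> \<int>"
    unfolding K_def using int by (auto intro!: Ints_sum Ints_mult Ints_diff)
  have prI: "pr j \<in> \<int>" for j
    unfolding pr_def
  proof (intro Ints_add Ints_sum)
    fix i assume "i \<in> {..<l}"
    then show "(if b i \<le> j \<and> j < b i + u i then c i (j - b i) else 0) \<in> \<int>"
      using cI[of i "j - b i"] by auto
  qed auto
  have prz: "pr j = 0" if "j \<notin> I_scheme n l u \<or> N \<le> j" for j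
  proof -
    have hi: "\<forall>i<l. \<not> (b i \<le> j \<and> j < b i + u i)"
    proof (intro allI impI)
      fix i assume i: "i < l"
      have "b i + u i \<le> N" using offs_mono[of "Suc i" l u] offs_Suc[of u i] i unfolding b_def N_def by simp
      moreover have "n \<le> b i" unfolding b_def by simp
      ultimately show "\<not> (b i \<le> j \<and> j < b i + u i)" using that unfolding I_scheme_def N_def by auto
    qed
    have "j < n \<Longrightarrow> \<pi> j = 0" using that pz ln unfolding I_scheme_def N_def by auto
    then show ?thesis unfolding pr_def using hi by (auto intro!: sum.neutral)
  qed
  define \<pi>' where "\<pi>' j = \<lfloor>pr j\<rfloor>" for j
  define \<pi>0' where "\<pi>0' = \<pi>0 - \<lfloor>K\<rfloor>"
  have pe: "real_of_int (\<pi>' j) = pr j" for j unfolding \<pi>'_def using of_int_floor_Ints[OF prI] .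
  have Ke: "real_of_int \<lfloor>K\<rfloor> = K" using of_int_floor_Ints[OF KI] .
  show ?thesis
  proof (intro exI conjI)
    show "\<forall>j. j \<notin> I_scheme n l u \<or> n + offs u l \<le> j \<longrightarrow> \<pi>' j = 0"
      using prz unfolding \<pi>'_def N_def by auto
    show "{y. Fm n l u v0 M w0 y \<in> {y. of_int \<pi>0 < (\<Sum>j<n + offs u l. of_int (\<pi> j) * y j) \<and>
                (\<Sum>j<n + offs u l. of_int (\<pi> j) * y j) < of_int \<pi>0 + 1}}
    = {y. of_int \<pi>0' < (\<Sum>j<n + offs u l. of_int (\<pi>' j) * y j) \<and>
                (\<Sum>j<n + offs u l. of_int (\<pi>' j) * y j) < of_int \<pi>0' + 1}"
      using key unfolding N_def pe \<pi>0'_def by (auto simp: Ke)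
  qed
qed


lemma transfer:
  assumes ln: "l \<le> n"
    and int: "\<forall>i<l. (\<forall>k<u i. v0 i k \<in> \<int> \<and> w0 i k \<in> \<int>) \<and> (\<forall>k<u i. \<forall>k'<u i. M i k k' \<in> \<int>)"
    and geo: "\<forall>i<l. \<forall>x z. (x,z) \<in> B i \<longrightarrow> (x, Gm (u i) (v0 i) (M i) (w0 i) z) \<in> C i"
  shows "proj_x n (split_closure (n + offs u l) (P_scheme n P l u B) (I_scheme n l u))
       \<subseteq> proj_x n (split_closure (n + offs u l) (P_scheme n P l u C) (I_scheme n l u))"
proof
  define F where "F = Fm n l u v0 M w0"
  have FP: "F y \<in> P_scheme n P l u C" if y: "y \<in> P_scheme n P l u B" for y
  proof -
    have v: "F y \<in> vecs (n + offs u l)" unfolding vecs_def F_def using Fm_high by auto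
    have x: "(\<lambda>j. if j < n then F y j else 0) = (\<lambda>j. if j < n then y j else 0)"
      unfolding F_def using Fm_x by auto
    have "(F y i, (\<lambda>k. if k < u i then F y (n + offs u i + k) else 0)) \<in> C i" if i: "i < l" for i
    proof -
      have "(y i, (\<lambda>k. if k < u i then y (n + offs u i + k) else 0)) \<in> B i"
        using y i unfolding P_scheme_def by auto
      then have "(y i, Gm (u i) (v0 i) (M i) (w0 i) (\<lambda>k. if k < u i then y (n + offs u i + k) else 0)) \<in> C i"
        using geo i by auto
      moreover have "F y i = y i" unfolding F_def using Fm_x i ln by auto
      moreover have "(\<lambda>k. if k < u i then F y (n + offs u i + k) else 0)
          = Gm (u i) (v0 i) (M i) (w0 i) (\<lambda>k. if k < u i then y (n + offs u i + k) else 0)"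
      proof (rule ext)
        fix k show "(if k < u i then F y (n + offs u i + k) else 0)
          = Gm (u i) (v0 i) (M i) (w0 i) (\<lambda>k. if k < u i then y (n + offs u i + k) else 0) k"
          using i Fm_blk[of i l k u n v0 M w0 y] Gm_cong[of "u i" "\<lambda>k. if k < u i then y (n + offs u i + k) else 0"
              "\<lambda>k. y (n + offs u i + k)" "v0 i" "M i" "w0 i"]
          unfolding F_def by (auto simp: Gm_def)
      qed
      ultimately show ?thesis by simp
    qed
    then show ?thesis using v x y unfolding P_scheme_def by auto
  qed
  fix p assume "p \<in> proj_x n (split_closure (n + offs u l) (P_scheme n P l u B) (I_scheme n l u))"
  then obtain y where y: "y \<in> split_closure (n + offs u l) (P_scheme n P l u B) (I_scheme n l u)"
    and p: "p = (\<lambda>j. if j < n then y j else 0)"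
    unfolding proj_x_def by auto
  have "F y \<in> split_closure (n + offs u l) (P_scheme n P l u C) (I_scheme n l u)"
    unfolding split_closure_def
  proof (rule InterI)
    fix T assume "T \<in> {convex hull (P_scheme n P l u C - S) | S.
      \<exists>(\<pi>::nat \<Rightarrow> int) (\<pi>0::int). (\<forall>j. j \<notin> I_scheme n l u \<or> n + offs u l \<le> j \<longrightarrow> \<pi> j = 0) \<and>
        S = {y. of_int \<pi>0 < (\<Sum>j<n + offs u l. of_int (\<pi> j) * y j) \<and>
                (\<Sum>j<n + offs u l. of_int (\<pi> j) * y j) < of_int \<pi>0 + 1}}"
    then obtain S \<pi> \<pi>0 where T: "T = convex hull (P_scheme n P l u C - S)"
      and pz: "\<forall>j. j \<notin> I_scheme n l u \<or> n + offs u l \<le> j \<longrightarrow> \<pi> j = 0"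
      and S: "S = {y. of_int \<pi>0 < (\<Sum>j<n + offs u l. of_int (\<pi> j) * y j) \<and>
                (\<Sum>j<n + offs u l. of_int (\<pi> j) * y j) < of_int \<pi>0 + 1}"
      by blast
    obtain \<pi>' \<pi>0' where pz': "\<forall>j. j \<notin> I_scheme n l u \<or> n + offs u l \<le> j \<longrightarrow> \<pi>' j = 0"
      and S': "{y. F y \<in> S} = {y. of_int \<pi>0' < (\<Sum>j<n + offs u l. of_int (\<pi>' j) * y j) \<and>
                (\<Sum>j<n + offs u l. of_int (\<pi>' j) * y j) < of_int \<pi>0' + 1}"
      using split_pre[OF ln int pz, of \<pi>0] unfolding S F_def by blast
    have "y \<in> convex hull (P_scheme n P l u B - {y. F y \<in> S})"
      using y unfolding split_closure_def S' using pz' by blast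
    then have "F y \<in> F ` (convex hull (P_scheme n P l u B - {y. F y \<in> S}))" by blast
    also have "\<dots> \<subseteq> convex hull (F ` (P_scheme n P l u B - {y. F y \<in> S}))"
      by (rule hull_aff) (simp add: F_def Fm_aff)
    also have "\<dots> \<subseteq> convex hull (P_scheme n P l u C - S)"
      by (rule hull_mono) (use FP in auto)
    finally show "F y \<in> T" using T by simp
  qed
  moreover have "p = (\<lambda>j. if j < n then F y j else 0)"
    unfolding p F_def using Fm_x by auto
  ultimately show "p \<in> proj_x n (split_closure (n + offs u l) (P_scheme n P l u C) (I_scheme n l u))"
    unfolding proj_x_def by blast
qed

lemma transfer2:
  assumes ln: "l \<le> n"
    and hB: "\<forall>i<l. unimodular_binpoly (u i) (B i)" and hC: "\<forall>i<l. unimodular_binpoly (u i) (C i)"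
  shows "proj_x n (split_closure (n + offs u l) (P_scheme n P l u B) (I_scheme n l u))
       \<subseteq> proj_x n (split_closure (n + offs u l) (P_scheme n P l u C) (I_scheme n l u))"
proof -
  have "\<forall>i. \<exists>t. i < l \<longrightarrow> (\<forall>k<u i. fst t k \<in> \<int> \<and> snd (snd t) k \<in> \<int>) \<and> (\<forall>k<u i. \<forall>k'<u i. fst (snd t) k k' \<in> \<int>) \<and>
     (\<forall>x z. (x,z) \<in> B i \<longrightarrow> (x, Gm (u i) (fst t) (fst (snd t)) (snd (snd t)) z) \<in> C i)"
    using unimod_map hB hC by blast
  then obtain f where f: "\<forall>i. i < l \<longrightarrow> (\<forall>k<u i. fst (f i) k \<in> \<int> \<and> snd (snd (f i)) k \<in> \<int>) \<and> (\<forall>k<u i. \<forall>k'<u i. fst (snd (f i)) k k' \<in> \<int>) \<and>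
     (\<forall>x z. (x,z) \<in> B i \<longrightarrow> (x, Gm (u i) (fst (f i)) (fst (snd (f i))) (snd (snd (f i))) z) \<in> C i)"
    by (metis choice)
  show ?thesis
    by (rule transfer[OF ln, of u "\<lambda>i. fst (f i)" "\<lambda>i. snd (snd (f i))" "\<lambda>i. fst (snd (f i))"]) (use f in auto)
qed

theorem corollary2:
  fixes n m l :: nat and A :: "nat \<Rightarrow> nat \<Rightarrow> real" and b :: "nat \<Rightarrow> real"
    and u :: "nat \<Rightarrow> nat"
    and B C :: "nat \<Rightarrow> (real \<times> (nat \<Rightarrow> real)) set"
  assumes "l \<le> n"
    and "\<forall>r<m. \<forall>j<n. A r j \<in> \<rat>" and "\<forall>r<m. b r \<in> \<rat>"
    and "\<forall>i<l. 0 < u i"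
    and "\<forall>i<l. unimodular_binpoly (u i) (B i)"
    and "\<forall>i<l. unimodular_binpoly (u i) (C i)"
  shows "proj_x n (split_closure (n + offs u l) (P_scheme n (polyP n m A b l u) l u B)
                     (I_scheme n l u))
       = proj_x n (split_closure (n + offs u l) (P_scheme n (polyP n m A b l u) l u C)
                     (I_scheme n l u))"
  using transfer2[OF assms(1) assms(5) assms(6)] transfer2[OF assms(1) assms(6) assms(5)] by blast

end
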